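(* Let $\Im^k=(V,L)$ be the $(k+1)$-regular tree ($k\ge 1$), let $\Omega=\mathbb{Z}^V$, let $\mathcal{N}$ be the set of all finite nonempty subsets of $V$, and fix $\theta>0$. For $\Lambda\in\mathcal{N}$ and $\sigma\in\Omega$ define $$U_\Lambda(\sigma)=H_\Lambda(\sigma_\Lambda)=\sum_{j=1}^{|\Lambda|}\Big[b_j(\sigma_\Lambda)\ln\frac{\theta}{j}-\ln\big(b_j(\sigma_\Lambda)!\big)\Big],$$ where $\sigma_\Lambda$ is the restriction of $\sigma$ to $\Lambda$ and $b_j(\sigma_\Lambda)$ is the number of distinct values in $\mathbb{Z}$ that appear exactly $j$ times among $\{\sigma(x):x\in\Lambda\}$. Then the potential $U=\{U_\Lambda\}_{\Lambda\in\mathcal{N}}$ is not absolutely summable: for every $x\in V$, $$\sum_{\Lambda\in\mathcal{N},\,x\in\Lambda}\|U_\Lambda\|_\infty=\infty,\qquad \|f\|_\infty:=\sup_{\sigma\in\Omega}|f(\sigma)|.$$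
   Context: A potential $U=\{U_\Lambda\}_{\Lambda\in\mathcal N}$ is called absolutely summable if $\sum_{\Lambda\in\mathcal N,\,x\in\Lambda}\|U_\Lambda\|_\infty<\infty$ for all $x\in V$. The potential above is the one associated with the multivariate Ewens weights $\frac{1}{Z_{|\Lambda|}(\theta)}\prod_{j=1}^{|\Lambda|}(\theta/j)^{b_j(\sigma_\Lambda)}\frac{1}{b_j(\sigma_\Lambda)!}$, via $H_\Lambda=\ln$ of the unnormalized weight. *)

theory Defs
  imports "HOL-Analysis.Analysis"
begin

definition is_walk :: "('v \<Rightarrow> 'v \<Rightarrow> bool) \<Rightarrow> 'v list \<Rightarrow> bool" where
  "is_walk E xs \<longleftrightarrow> xs \<noteq> [] \<and> (\<forall>i. Suc i < length xs \<longrightarrow> E (xs ! i) (xs ! Suc i))"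

definition is_cycle :: "('v \<Rightarrow> 'v \<Rightarrow> bool) \<Rightarrow> 'v list \<Rightarrow> bool" where
  "is_cycle E xs \<longleftrightarrow> length xs \<ge> 3 \<and> distinct xs \<and> is_walk E xs \<and> E (last xs) (hd xs)"

definition regular_tree :: "nat \<Rightarrow> ('v \<Rightarrow> 'v \<Rightarrow> bool) \<Rightarrow> bool" where
  "regular_tree k E \<longleftrightarrow>
     (\<forall>x y. E x y \<longrightarrow> E y x) \<and> (\<forall>x. \<not> E x x) \<and>
     (\<forall>x. finite {y. E x y} \<and> card {y. E x y} = k + 1) \<and>
     (\<forall>u v. \<exists>xs. is_walk E xs \<and> hd xs = u \<and> last xs = v) \<and>
     (\<forall>xs. \<not> is_cycle E xs)"

definition bcount :: "nat \<Rightarrow> 'v set \<Rightarrow> ('v \<Rightarrow> int) \<Rightarrow> nat" where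
  "bcount j \<Lambda> \<sigma> = card {a :: int. card {x \<in> \<Lambda>. \<sigma> x = a} = j}"

definition ewens_U :: "real \<Rightarrow> 'v set \<Rightarrow> ('v \<Rightarrow> int) \<Rightarrow> real" where
  "ewens_U \<theta> \<Lambda> \<sigma> = (\<Sum>j = 1..card \<Lambda>.
      real (bcount j \<Lambda> \<sigma>) * ln (\<theta> / real j) - ln (fact (bcount j \<Lambda> \<sigma>)))"

definition sup_norm :: "(('v \<Rightarrow> int) \<Rightarrow> real) \<Rightarrow> ennreal" where
  "sup_norm f = (SUP \<sigma>. ennreal \<bar>f \<sigma>\<bar>)"

end

theory Submission
  imports Defs
begin

lemma walk_cons:
  assumes "is_walk E xs" "E w (hd xs)"
  shows "is_walk E (w # xs)"
  using assms unfolding is_walk_def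
  by (auto simp: nth_Cons hd_conv_nth split: nat.splits)

lemma walk_take:
  assumes "is_walk E xs" "0 < m"
  shows "is_walk E (take m xs)"
  using assms unfolding is_walk_def by auto

lemma long_paths:
  assumes "k \<ge> 1" and "regular_tree k E"
  shows "\<exists>xs. length xs = Suc n \<and> distinct xs \<and> is_walk E xs"
proof (induction n)
  case 0
  show ?case by (rule exI[of _ "[undefined]"]) (auto simp: is_walk_def)
next
  case (Suc n)
  then obtain xs where xs: "length xs = Suc n" "distinct xs" "is_walk E xs" by blast
  obtain v ys where v: "xs = v # ys" using xs(1) by (cases xs) auto
  have sym: "\<And>a b. E a b \<Longrightarrow> E b a" and irr: "\<And>a. \<not> E a a"
    and fin: "finite {y. E v y}" and cd: "card {y. E v y} = k + 1"
    and nocyc: "\<And>zs. \<not> is_cycle E zs"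
    using assms(2) unfolding regular_tree_def by blast+
  have "card {y. E v y} \<ge> 2" using cd assms(1) by simp
  have "\<exists>w. E v w \<and> (ys \<noteq> [] \<longrightarrow> w \<noteq> hd ys)"
  proof (cases "ys = []")
    case True
    have "{y. E v y} \<noteq> {}" using \<open>card {y. E v y} \<ge> 2\<close> by (metis card.empty not_numeral_le_zero)
    then show ?thesis using True by auto
  next
    case False
    have "\<not> {y. E v y} \<subseteq> {hd ys}"
    proof
      assume "{y. E v y} \<subseteq> {hd ys}"
      then have "card {y. E v y} \<le> card {hd ys}" by (intro card_mono) auto
      then show False using \<open>card {y. E v y} \<ge> 2\<close> by simp
    qed
    then show ?thesis by auto
  qed
  then obtain w where w: "E v w" "ys \<noteq> [] \<Longrightarrow> w \<noteq> hd ys" by blast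
  have wnot: "w \<notin> set xs"
  proof
    assume "w \<in> set xs"
    then obtain i where i: "i < length xs" "xs ! i = w" by (auto simp: in_set_conv_nth)
    have "i \<noteq> 0"
    proof
      assume "i = 0"
      then have "w = v" using i v by simp
      then show False using w(1) irr by simp
    qed
    have "i \<noteq> 1" using i v w by (cases ys) auto
    then have i2: "i \<ge> 2" using \<open>i \<noteq> 0\<close> by linarith
    let ?zs = "take (Suc i) xs"
    have "is_cycle E ?zs"
      unfolding is_cycle_def
    proof (intro conjI)
      show "3 \<le> length ?zs" using i i2 by simp
      show "distinct ?zs" using xs(2) by simp
      show "is_walk E ?zs" using walk_take[OF xs(3)] by simp
      have "last ?zs = w" using i by (subst last_conv_nth) (auto simp: min_def intro: arg_cong[where f="(!) xs"])
      moreover have "hd ?zs = v" using v by simp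
      ultimately show "E (last ?zs) (hd ?zs)" using w(1) sym by simp
    qed
    then show False using nocyc by blast
  qed
  show ?case
    by (rule exI[of _ "w # xs"])
       (use xs wnot v w(1) sym in \<open>auto intro!: walk_cons\<close>)
qed

lemma infinite_V:
  assumes "k \<ge> 1" and "regular_tree k (E :: 'v \<Rightarrow> 'v \<Rightarrow> bool)"
  shows "infinite (UNIV :: 'v set)"
proof
  assume f: "finite (UNIV :: 'v set)"
  obtain xs :: "'v list" where "length xs = Suc (card (UNIV :: 'v set))" "distinct xs"
    using long_paths[OF assms] by blast
  then have "card (set xs) = Suc (card (UNIV :: 'v set))" by (simp add: distinct_card)
  moreover have "card (set xs) \<le> card (UNIV :: 'v set)" using f by (intro card_mono) auto
  ultimately show False by simp
qed

lemma bcount_const: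
  assumes "finite L" "L \<noteq> {}" "j \<ge> 1"
  shows "bcount j L (\<lambda>_. 0) = (if j = card L then 1 else 0)"
proof -
  have e: "{y \<in> L. 0 = a} = (if a = 0 then L else {})" for a :: int by auto
  have "{a :: int. card {y \<in> L. 0 = a} = j} = (if j = card L then {0} else {})"
    unfolding e using assms by (auto split: if_splits)
  then show ?thesis unfolding bcount_def by simp
qed

lemma ewens_const:
  assumes "finite L" "L \<noteq> {}"
  shows "ewens_U \<theta> L (\<lambda>_. 0) = ln (\<theta> / real (card L))"
proof -
  have n: "card L \<ge> 1" using assms by (simp add: Suc_le_eq card_gt_0_iff)
  have "ewens_U \<theta> L (\<lambda>_. 0) = (\<Sum>j = 1..card L. if j = card L then ln (\<theta> / real j) else 0)"
    unfolding ewens_U_def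
    by (intro sum.cong refl) (simp add: bcount_const[OF assms])
  also have "\<dots> = ln (\<theta> / real (card L))"
    using n by (simp add: sum.delta')
  finally show ?thesis .
qed

theorem lemma3p2:
  fixes k :: nat and E :: "'v \<Rightarrow> 'v \<Rightarrow> bool" and \<theta> :: real and x :: 'v
  assumes "k \<ge> 1" and "regular_tree k E" and "\<theta> > 0"
  shows "(\<Sum>\<^sub>\<infinity>\<Lambda>\<in>{\<Lambda>. finite \<Lambda> \<and> \<Lambda> \<noteq> {} \<and> x \<in> \<Lambda>}. sup_norm (ewens_U \<theta> \<Lambda>)) = \<infinity>"
proof -
  define N0 :: nat where "N0 = nat \<lceil>\<theta> * exp 1\<rceil> + 1"
  define S where "S = {\<Lambda>. finite \<Lambda> \<and> \<Lambda> \<noteq> {} \<and> x \<in> \<Lambda> \<and> card \<Lambda> \<ge> N0}"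
  have inf: "infinite (UNIV :: 'v set)" using infinite_V[OF assms(1,2)] .
  have ex: "\<exists>L. finite L \<and> x \<in> L \<and> card L = Suc n" for n
  proof -
    have "infinite (UNIV - {x})" using inf by simp
    then obtain A where A: "finite A" "card A = n" "A \<subseteq> UNIV - {x}"
      using infinite_arbitrarily_large by blast
    then show ?thesis by (intro exI[of _ "insert x A"]) (auto simp: card_insert_if)
  qed
  have Sinf: "infinite S"
  proof
    assume fS: "finite S"
    define M where "M = Max (card ` S)"
    obtain L where L: "finite L" "x \<in> L" "card L = Suc (M + N0)" using ex by blast
    have "L \<in> S" using L unfolding S_def by auto
    then have "card L \<le> M" unfolding M_def using fS by (intro Max_ge) auto
    then show False using L by simp
  qed
  have bound: "sup_norm (ewens_U \<theta> L) \<ge> 1" if "L \<in> S" for L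
  proof -
    have L: "finite L" "L \<noteq> {}" "card L \<ge> N0" using that unfolding S_def by auto
    have "\<theta> * exp 1 \<le> real N0" unfolding N0_def by linarith
    also have "\<dots> \<le> real (card L)" using L by simp
    finally have c: "\<theta> * exp 1 \<le> real (card L)" .
    have cp: "real (card L) > 0" using L by (simp add: card_gt_0_iff)
    have "\<theta> / real (card L) \<le> exp (-1)"
      using c cp by (simp add: divide_simps exp_minus) 
    then have "ln (\<theta> / real (card L)) \<le> ln (exp (-1))"
      using assms(3) cp by (subst ln_le_cancel_iff) auto
    then have "ln (\<theta> / real (card L)) \<le> -1" by simp
    then have "1 \<le> \<bar>ewens_U \<theta> L (\<lambda>_. 0)\<bar>" using ewens_const[OF L(1,2)] by simp
    then have "ennreal 1 \<le> ennreal \<bar>ewens_U \<theta> L (\<lambda>_. 0)\<bar>" by (rule ennreal_leI)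
    also have "\<dots> \<le> sup_norm (ewens_U \<theta> L)" unfolding sup_norm_def by (rule SUP_upper) simp
    finally show ?thesis by simp
  qed
  have "infsum (\<lambda>\<Lambda>. sup_norm (ewens_U \<theta> \<Lambda>)) S = \<infinity>"
    by (rule infsum_superconst_infinite_ennreal[where b=1]) (use bound Sinf in auto)
  moreover have "infsum (\<lambda>\<Lambda>. sup_norm (ewens_U \<theta> \<Lambda>)) S
      \<le> (\<Sum>\<^sub>\<infinity>\<Lambda>\<in>{\<Lambda>. finite \<Lambda> \<and> \<Lambda> \<noteq> {} \<and> x \<in> \<Lambda>}. sup_norm (ewens_U \<theta> \<Lambda>))"
    by (rule infsum_mono_neutral) (auto simp: S_def intro: nonneg_summable_on_complete)
  ultimately show ?thesis by (simp add: top_unique)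
qed

end
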